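(* Let $\pi_0\in(0,1)$, $\sigma\in(0,0.25]$, $w>0$, and let $\psi(\pi)=w$ if $\pi\ge\pi_0$ and $\psi(\pi)=0$ otherwise. For $(p_0,p_1)\in[0,1]^2$ let $$\pi_S=\frac{(1-p_1)\pi_0}{(1-p_1)\pi_0+(1-p_0)(1-\pi_0)},\qquad \pi_C=\frac{p_1\pi_0}{p_1\pi_0+p_0(1-\pi_0)},$$ $$\Phi_\theta(C,\sigma,\pi_0,p_0,p_1)=0.5+2\sigma\theta+(0.5+2\sigma\theta)\psi\!\left(\tfrac{(1+4\sigma)\pi_C}{1+4\sigma\pi_C}\right)+(0.5-2\sigma\theta)\psi\!\left(\tfrac{(1-4\sigma)\pi_C}{1-4\sigma\pi_C}\right)$$ and $\Phi_\theta(S,\sigma,\pi_0,p_0,p_1)=0.5+\psi(\pi_S)$, for $\theta\in\{0,1\}$. Then $$\Phi_\theta(C,\sigma,\pi_0,p_0,p_1)=\begin{cases}0.5+2\sigma\theta & \text{if } p_1(1+4\sigma)<p_0,\\ 0.5+2\sigma\theta+(0.5+2\sigma\theta)w & \text{if } p_1(1-4\sigma)<p_0\le p_1(1+4\sigma),\\ 0.5+2\sigma\theta+w & \text{if } p_0\le p_1(1-4\sigma),\end{cases}$$ and $\Phi_\theta(S,\sigma,\pi_0,p_0,p_1)=0.5+w$ if $p_0\ge p_1$ and $0.5$ otherwise.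
   Context: Interpretation: an expert of known type $\theta$ (competent iff $\theta=1$, prior $\pi_0$) chooses the complex rule with probability $p_\theta$; $\pi_C,\pi_S$ are the advisee's beliefs after observing the complex or simple rule; the expert earns wage $w$ iff the advisee's posterior that he is competent is at least $\pi_0$; $\Phi_\theta(r,\cdot)$ is the type-$\theta$ expert's expected payoff from choosing rule $r$ with certainty. *)

theory Defs
  imports Complex_Main
begin

definition psi :: "real \<Rightarrow> real \<Rightarrow> real \<Rightarrow> real" where
  "psi w pi0 p = (if p \<ge> pi0 then w else 0)"

definition piS :: "real \<Rightarrow> real \<Rightarrow> real \<Rightarrow> real" where
  "piS pi0 p0 p1 = ((1 - p1) * pi0) / ((1 - p1) * pi0 + (1 - p0) * (1 - pi0))"

definition piC :: "real \<Rightarrow> real \<Rightarrow> real \<Rightarrow> real" where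
  "piC pi0 p0 p1 = (p1 * pi0) / (p1 * pi0 + p0 * (1 - pi0))"

definition PhiC :: "real \<Rightarrow> real \<Rightarrow> real \<Rightarrow> real \<Rightarrow> real \<Rightarrow> real \<Rightarrow> real" where
  "PhiC w \<theta> \<sigma> pi0 p0 p1 =
     (let pc = piC pi0 p0 p1 in
      0.5 + 2 * \<sigma> * \<theta>
      + (0.5 + 2 * \<sigma> * \<theta>) * psi w pi0 ((1 + 4 * \<sigma>) * pc / (1 + 4 * \<sigma> * pc))
      + (0.5 - 2 * \<sigma> * \<theta>) * psi w pi0 ((1 - 4 * \<sigma>) * pc / (1 - 4 * \<sigma> * pc)))"

definition PhiS :: "real \<Rightarrow> real \<Rightarrow> real \<Rightarrow> real \<Rightarrow> real \<Rightarrow> real \<Rightarrow> real" where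
  "PhiS w \<theta> \<sigma> pi0 p0 p1 = 0.5 + psi w pi0 (piS pi0 p0 p1)"

end

theory Submission
  imports Defs
begin

lemma divge: "(0::real) < d \<Longrightarrow> (n / d \<ge> a) = (n \<ge> a * d)"
  by (simp add: pos_le_divide_eq)

theorem lemma5:
  fixes pi0 \<sigma> w p0 p1 \<theta> :: real
  assumes "0 < pi0" "pi0 < 1"
    and "0 < \<sigma>" "\<sigma> \<le> 0.25"
    and "w > 0"
    and "0 \<le> p0" "p0 \<le> 1" "0 \<le> p1" "p1 \<le> 1"
    and "\<theta> \<in> {0, 1}"
  shows "(p1 * pi0 + p0 * (1 - pi0) \<noteq> 0 \<and> 1 - 4 * \<sigma> * piC pi0 p0 p1 \<noteq> 0 \<longrightarrow>
            PhiC w \<theta> \<sigma> pi0 p0 p1 =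
              (if p1 * (1 + 4 * \<sigma>) < p0 then 0.5 + 2 * \<sigma> * \<theta>
               else if p1 * (1 - 4 * \<sigma>) < p0 then 0.5 + 2 * \<sigma> * \<theta> + (0.5 + 2 * \<sigma> * \<theta>) * w
               else 0.5 + 2 * \<sigma> * \<theta> + w))
       \<and> ((1 - p1) * pi0 + (1 - p0) * (1 - pi0) \<noteq> 0 \<longrightarrow>
            PhiS w \<theta> \<sigma> pi0 p0 p1 = (if p0 \<ge> p1 then 0.5 + w else 0.5))"
proof (intro conjI impI)
  assume h: "p1 * pi0 + p0 * (1 - pi0) \<noteq> 0 \<and> 1 - 4 * \<sigma> * piC pi0 p0 p1 \<noteq> 0"
  define D where "D = p1 * pi0 + p0 * (1 - pi0)"
  define pc where "pc = piC pi0 p0 p1"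
  have D0: "D > 0" using h assms unfolding D_def
    by (smt (verit) mult_nonneg_nonneg)
  have pcD: "pc * D = p1 * pi0" unfolding pc_def piC_def D_def[symmetric] using D0 by simp
  have pc0: "pc \<ge> 0" unfolding pc_def piC_def D_def[symmetric] using D0 assms by simp
  have pc1: "pc \<le> 1" unfolding pc_def piC_def D_def[symmetric] using D0 assms
    by (simp add: D_def divide_le_eq_1 mult_nonneg_nonneg)
  have den1: "1 + 4 * \<sigma> * pc > 0" using pc0 assms by (simp add: mult_nonneg_nonneg add_pos_nonneg)
  have "4 * \<sigma> * pc \<le> 1"
  proof -
    have "4 * \<sigma> * pc \<le> 1 * 1" using assms pc0 pc1 by (intro mult_mono) auto
    thus ?thesis by simp
  qed
  hence den2: "1 - 4 * \<sigma> * pc > 0" using h pc_def by auto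
  have e1: "((1 + 4 * \<sigma>) * pc / (1 + 4 * \<sigma> * pc) \<ge> pi0) = (p1 * (1 + 4 * \<sigma>) \<ge> p0)"
  proof -
    have "((1 + 4 * \<sigma>) * pc / (1 + 4 * \<sigma> * pc) \<ge> pi0) = (pc * (1 + 4*\<sigma>*(1 - pi0)) \<ge> pi0)"
      using den1 by (simp add: divge algebra_simps)
    also have "\<dots> = (pc * D * (1 + 4*\<sigma>*(1 - pi0)) \<ge> pi0 * D)"
      using D0 by (smt (verit) mult_le_cancel_right_pos mult.commute mult.assoc)
    also have "\<dots> = (pi0 * (p1 * (1 + 4*\<sigma>*(1 - pi0))) \<ge> pi0 * D)" by (simp only: pcD) (simp add: mult_ac)
    also have "\<dots> = (p1 * (1 + 4*\<sigma>*(1 - pi0)) \<ge> D)" using assms by simp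
    also have "\<dots> = ((1 - pi0) * (p1 * (1 + 4*\<sigma>)) \<ge> (1 - pi0) * p0)" by (simp add: D_def algebra_simps)
    also have "\<dots> = (p1 * (1 + 4 * \<sigma>) \<ge> p0)" using assms by simp
    finally show ?thesis .
  qed
  have e2: "((1 - 4 * \<sigma>) * pc / (1 - 4 * \<sigma> * pc) \<ge> pi0) = (p1 * (1 - 4 * \<sigma>) \<ge> p0)"
  proof -
    have "((1 - 4 * \<sigma>) * pc / (1 - 4 * \<sigma> * pc) \<ge> pi0) = (pc * (1 - 4*\<sigma>*(1 - pi0)) \<ge> pi0)"
      using den2 by (simp add: divge algebra_simps)
    also have "\<dots> = (pc * D * (1 - 4*\<sigma>*(1 - pi0)) \<ge> pi0 * D)"
      using D0 by (smt (verit) mult_le_cancel_right_pos mult.commute mult.assoc)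
    also have "\<dots> = (pi0 * (p1 * (1 - 4*\<sigma>*(1 - pi0))) \<ge> pi0 * D)" by (simp only: pcD) (simp add: mult_ac)
    also have "\<dots> = (p1 * (1 - 4*\<sigma>*(1 - pi0)) \<ge> D)" using assms by simp
    also have "\<dots> = ((1 - pi0) * (p1 * (1 - 4*\<sigma>)) \<ge> (1 - pi0) * p0)" by (simp add: D_def algebra_simps)
    also have "\<dots> = (p1 * (1 - 4 * \<sigma>) \<ge> p0)" using assms by simp
    finally show ?thesis .
  qed
  have mono: "p1 * (1 - 4 * \<sigma>) \<le> p1 * (1 + 4 * \<sigma>)" using assms by (intro mult_left_mono) auto
  show "PhiC w \<theta> \<sigma> pi0 p0 p1 =
              (if p1 * (1 + 4 * \<sigma>) < p0 then 0.5 + 2 * \<sigma> * \<theta>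
               else if p1 * (1 - 4 * \<sigma>) < p0 then 0.5 + 2 * \<sigma> * \<theta> + (0.5 + 2 * \<sigma> * \<theta>) * w
               else 0.5 + 2 * \<sigma> * \<theta> + w)"
    unfolding PhiC_def Let_def pc_def[symmetric] psi_def using e1 e2 mono
    by (auto simp: algebra_simps)
next
  assume h: "(1 - p1) * pi0 + (1 - p0) * (1 - pi0) \<noteq> 0"
  define E where "E = (1 - p1) * pi0 + (1 - p0) * (1 - pi0)"
  have E0: "E > 0" using h assms unfolding E_def
    by (smt (verit) mult_nonneg_nonneg)
  have "(piS pi0 p0 p1 \<ge> pi0) = ((1 - p1) * pi0 \<ge> pi0 * E)"
    unfolding piS_def E_def[symmetric] using E0 by (simp add: divge)
  also have "\<dots> = (pi0 * (1 - p1) \<ge> pi0 * E)" by (simp add: mult.commute)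
  also have "\<dots> = (1 - p1 \<ge> E)" using assms by simp
  also have "\<dots> = ((1 - pi0) * (1 - p1) \<ge> (1 - pi0) * (1 - p0))" by (simp add: E_def algebra_simps)
  also have "\<dots> = (p0 \<ge> p1)" using assms by simp
  finally have "(piS pi0 p0 p1 \<ge> pi0) = (p0 \<ge> p1)" .
  thus "PhiS w \<theta> \<sigma> pi0 p0 p1 = (if p0 \<ge> p1 then 0.5 + w else 0.5)"
    unfolding PhiS_def psi_def by auto
qed

end
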